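(* There is an absolute constant $c$ such that the following holds. Let $T$ be an orientation-preserving Möbius automorphism of the upper half plane $\mathbb H$, and let $z\in\mathbb C$ with $i+z\in\mathbb H$ and $T(i+z)=i$. Let $v,w\in\partial\mathbb U$. If $|z|\le1/3$ then $$\operatorname{ash}(T,v,w)=\Re\Big[(\bar w-\bar v)\Big(-z-\tfrac{i(2+\bar v+\bar w)}{4}z^2\Big)\Big]+\varepsilon_3=-\Re\big[(\bar w-\bar v)z\big]+\varepsilon_2=\varepsilon_1,$$ where $|\varepsilon_d|\le c|w-v||z|^d\le 2c|z|^d$ for $d=1,2,3$. If $v=-1$, the same bounds hold without the assumption $|z|\le1/3$.
   Context: $\mathbb U$ is the open unit disk; $U(r)=\frac{i-r}{i+r}$ maps $\overline{\mathbb H}$ bijectively onto $\overline{\mathbb U}$ (with $U(\infty)=-1$), sending $i$ to $0$. A Möbius automorphism $T$ of $\mathbb H$ acts on $\overline{\mathbb U}$ by $\hat T=U\circ T\circ U^{-1}$. For $v,w\in\partial\mathbb U$, $\operatorname{ash}(T,v,w)=\operatorname{Arg}_{[0,2\pi)}(\hat T(w)/\hat T(v))-\operatorname{Arg}_{[0,2\pi)}(w/v)$, with $\operatorname{Arg}_{[0,2\pi)}$ the argument in $[0,2\pi)$. *)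

theory Defs
  imports "HOL-Analysis.Analysis"
begin

text \<open>2x2 complex matrices (p,q,r,s) = [[p,q],[r,s]] acting as Moebius maps.\<close>
type_synonym cmat = "complex \<times> complex \<times> complex \<times> complex"

definition mob_apply :: "cmat \<Rightarrow> complex \<Rightarrow> complex" where
  "mob_apply M x = (case M of (p,q,r,t) \<Rightarrow> (p * x + q) / (r * x + t))"

definition cmat_mult :: "cmat \<Rightarrow> cmat \<Rightarrow> cmat" where
  "cmat_mult M N = (case M of (p,q,r,t) \<Rightarrow> case N of (p2,q2,r2,t2) \<Rightarrow>
     (p * p2 + q * r2, p * q2 + q * t2, r * p2 + t * r2, r * q2 + t * t2))"

text \<open>The Moebius map T(x) = (a x + b)/(c x + d) with real a,b,c,d; it is an
  orientation-preserving automorphism of the upper half plane iff a d - b c > 0.\<close>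
definition T_mat :: "real \<Rightarrow> real \<Rightarrow> real \<Rightarrow> real \<Rightarrow> cmat" where
  "T_mat a b c d = (complex_of_real a, complex_of_real b, complex_of_real c, complex_of_real d)"

definition mobT :: "real \<Rightarrow> real \<Rightarrow> real \<Rightarrow> real \<Rightarrow> complex \<Rightarrow> complex" where
  "mobT a b c d = mob_apply (T_mat a b c d)"

text \<open>U(r) = (i - r)/(i + r) and its inverse U^{-1}(w) = i(1-w)/(1+w).\<close>
definition U_mat :: cmat where "U_mat = (-1, \<i>, 1, \<i>)"
definition Uinv_mat :: cmat where "Uinv_mat = (-\<i>, \<i>, 1, 1)"

definition Ucayley :: "complex \<Rightarrow> complex" where "Ucayley = mob_apply U_mat"

text \<open>hat T = U o T o U^{-1}, as the Moebius map of the product matrix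
  (this is the extension to the Riemann sphere, correct also at w = -1 = U(\<infinity>)).\<close>
definition hatT :: "real \<Rightarrow> real \<Rightarrow> real \<Rightarrow> real \<Rightarrow> complex \<Rightarrow> complex" where
  "hatT a b c d = mob_apply (cmat_mult U_mat (cmat_mult (T_mat a b c d) Uinv_mat))"

definition Arg02 :: "complex \<Rightarrow> real" where
  "Arg02 x = (if Arg x < 0 then Arg x + 2 * pi else Arg x)"

definition ash :: "real \<Rightarrow> real \<Rightarrow> real \<Rightarrow> real \<Rightarrow> complex \<Rightarrow> complex \<Rightarrow> real" where
  "ash a b c d v w = Arg02 (hatT a b c d w / hatT a b c d v) - Arg02 (w / v)"

end

theory Submission
  imports Defs
begin

lemma exp_i_minus_1: "cmod (exp (\<i> * of_real th) - 1) \<le> \<bar>th\<bar>"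
proof -
  have "norm ((\<lambda>x. exp (\<i> * x)) (of_real th) - (\<lambda>x. exp (\<i> * x)) 0) \<le> 1 * norm (of_real th - (0::complex))"
  proof (rule field_differentiable_bound [OF convex_Reals, where f' = "\<lambda>x. \<i> * exp (\<i> * x)"])
    fix x :: complex assume "x \<in> \<real>"
    show "((\<lambda>x. exp (\<i> * x)) has_field_derivative \<i> * exp (\<i> * x)) (at x within \<real>)"
      by (auto intro!: derivative_eq_intros)
    from \<open>x \<in> \<real>\<close> obtain r where "x = of_real r" by (auto elim: Reals_cases)
    then show "norm (\<i> * exp (\<i> * x)) \<le> 1" by (simp add: norm_mult)
  qed auto
  then show ?thesis by simp
qed

lemma exp_i_2pi: "exp (\<i> * of_real (x + 2*pi)) = exp (\<i> * of_real x)"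
proof -
  have "exp (\<i> * of_real (x + 2*pi)) = exp (\<i> * of_real x + \<i> * (of_real pi * 2))"
    by (simp add: algebra_simps)
  also have "\<dots> = exp (\<i> * of_real x)" by (simp add: exp_add)
  finally show ?thesis .
qed

lemma Arg02_range: "0 \<le> Arg02 x \<and> Arg02 x < 2*pi"
  using Arg_bounded[of x] by (auto simp: Arg02_def)

lemma Arg02_exp: assumes "0 \<le> th" "th < 2*pi" shows "Arg02 (exp (\<i> * of_real th)) = th"
proof (cases "th \<le> pi")
  case True
  have "Arg (exp (\<i> * of_real th)) = th"
    using True assms by (subst Arg_exp) auto
  then show ?thesis using assms by (simp add: Arg02_def)
next
  case False
  have e: "exp (\<i> * of_real th) = exp (\<i> * of_real (th - 2*pi))"
    using exp_i_2pi[of "th - 2*pi"] by simp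
  have "Arg (exp (\<i> * of_real (th - 2*pi))) = th - 2*pi"
    using False assms by (subst Arg_exp) auto
  then show ?thesis using False assms e by (simp add: Arg02_def)
qed

lemma unit_exp: assumes "cmod r = 1" shows "r = exp (\<i> * of_real (Arg02 r))"
proof -
  have r0: "r \<noteq> 0" using assms by auto
  have "r = exp (Ln r)" using r0 by simp
  also have "Ln r = \<i> * of_real (Arg r)"
    using r0 assms by (simp add: complex_eq_iff Arg_eq_Im_Ln)
  finally have r: "r = exp (\<i> * of_real (Arg r))" .
  show ?thesis
  proof (cases "Arg r < 0")
    case True
    then show ?thesis using r exp_i_2pi[of "Arg r"] by (simp add: Arg02_def)
  next
    case False
    then show ?thesis using r by (simp add: Arg02_def)
  qed
qed

lemma Arg02_shift:
  assumes "cmod r = 1" "\<bar>dl\<bar> \<le> cmod (r - 1) / 2"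
  shows "Arg02 (r * exp (\<i> * of_real dl)) = Arg02 r + dl"
proof -
  define th where "th = Arg02 r"
  have th: "0 \<le> th" "th < 2*pi" using Arg02_range th_def by auto
  have r: "r = exp (\<i> * of_real th)" using unit_exp assms th_def by blast
  have b1: "cmod (r - 1) \<le> th" using exp_i_minus_1[of th] r th by simp
  have "r = exp (\<i> * of_real (th - 2*pi))" using r exp_i_2pi[of "th - 2*pi"] by simp
  then have b2: "cmod (r - 1) \<le> 2*pi - th" using exp_i_minus_1[of "th - 2*pi"] th by simp
  have "r * exp (\<i> * of_real dl) = exp (\<i> * of_real (th + dl))"
    using r by (simp add: exp_add[symmetric] algebra_simps)
  moreover have "0 \<le> th + dl" "th + dl < 2*pi" using assms(2) b1 b2 th by (auto simp: abs_le_iff)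
  ultimately show ?thesis using Arg02_exp th_def by metis
qed

lemma Arg02_half:
  assumes "Re g > 0"
  shows "Arg02 (- g / cnj g) = pi + 2 * Arg g"
proof -
  have g0: "g \<noteq> 0" using assms by auto
  have A: "\<bar>Arg g\<bar> < pi/2" using Arg_Re_pos assms by blast
  have "g = exp (Ln g)" using g0 by simp
  also have "Ln g = of_real (ln (cmod g)) + \<i> * of_real (Arg g)"
    using g0 by (simp add: complex_eq_iff Arg_eq_Im_Ln)
  finally have g: "g = of_real (cmod g) * exp (\<i> * of_real (Arg g))"
    using g0 by (simp add: exp_add exp_of_real)
  have "cnj g = of_real (cmod g) * exp (- (\<i> * of_real (Arg g)))"
    by (subst g) (simp add: exp_cnj)
  then have "- g / cnj g = - (exp (\<i> * of_real (Arg g)) / exp (- (\<i> * of_real (Arg g))))"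
    using g0 by (subst g) (simp add: divide_simps)
  also have "\<dots> = exp (\<i> * of_real (pi + 2 * Arg g))"
    by (simp add: exp_diff[symmetric] exp_add algebra_simps)
  finally have "- g / cnj g = exp (\<i> * of_real (pi + 2 * Arg g))" .
  moreover have "0 \<le> pi + 2 * Arg g" "pi + 2 * Arg g < 2*pi" using A by auto
  ultimately show ?thesis using Arg02_exp by metis
qed


lemma Re_pos_not_nonpos: "Re z > 0 \<Longrightarrow> z \<notin> \<real>\<^sub>\<le>\<^sub>0"
  by (auto simp: complex_nonpos_Reals_iff)

lemma Ln_lip:
  assumes "r < 1" "cmod (a - 1) \<le> r" "cmod (b - 1) \<le> r"
  shows "cmod (Ln a - Ln b) \<le> cmod (a - b) / (1 - r)"
proof -
  have "cmod (Ln a - Ln b) \<le> (1/(1-r)) * cmod (a - b)"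
  proof (rule field_differentiable_bound [OF convex_cball, where f' = inverse])
    fix x :: complex assume x: "x \<in> cball 1 r"
    then have d: "cmod (x - 1) \<le> r" by (simp add: dist_norm norm_minus_commute)
    have "\<bar>Re (x - 1)\<bar> \<le> cmod (x - 1)" by (rule abs_Re_le_cmod)
    then have "Re x > 0" using d assms(1) by simp
    then show "(Ln has_field_derivative inverse x) (at x within cball 1 r)"
      by (rule has_field_derivative_at_within[OF has_field_derivative_Ln[OF Re_pos_not_nonpos]])
    have "1 - r \<le> cmod x" using norm_triangle_ineq2[of 1 x] d by (simp add: norm_minus_commute)
    moreover have "0 < 1 - r" using assms(1) by simp
    ultimately have "inverse (cmod x) \<le> inverse (1 - r)" by (intro le_imp_inverse_le) auto
    then show "cmod (inverse x) \<le> 1 / (1 - r)" by (metis norm_inverse inverse_eq_divide)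
  next
    show "a \<in> cball 1 r" "b \<in> cball 1 r" using assms by (auto simp: dist_norm norm_minus_commute)
  qed
  then show ?thesis by simp
qed

definition FF :: "complex \<Rightarrow> complex" where "FF h = Ln (1 - h) + h + h^2/2"

lemma FF_lip:
  assumes "r < 1" "cmod h1 \<le> r" "cmod h2 \<le> r"
  shows "cmod (FF h1 - FF h2) \<le> r^2/(1-r) * cmod (h1 - h2)"
proof (rule field_differentiable_bound [OF convex_cball, where f' = "\<lambda>h. - (h^2 / (1 - h))"])
  fix x :: complex assume x: "x \<in> cball 0 r"
  then have d: "cmod x \<le> r" by simp
  have "\<bar>Re x\<bar> \<le> cmod x" by (rule abs_Re_le_cmod)
  then have re: "Re (1 - x) > 0" using d assms(1) by auto
  then have x1: "1 - x \<noteq> 0" by auto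
  have "((\<lambda>h. Ln (1-h)) has_field_derivative (inverse (1-x) * (-1))) (at x)"
    by (rule DERIV_chain2[where g="\<lambda>h. 1 - h", OF has_field_derivative_Ln[OF Re_pos_not_nonpos[OF re]]])
       (auto intro!: derivative_eq_intros)
  then have "(FF has_field_derivative (inverse (1-x) * (-1) + 1 + (2 * x)/2)) (at x)"
    using Re_pos_not_nonpos[OF re] unfolding FF_def[abs_def] by (auto intro!: derivative_eq_intros)
  moreover have "inverse (1-x) * (-1) + 1 + (2 * x)/2 = - (x^2 / (1 - x))"
    using x1 by (simp add: divide_simps) (simp add: algebra_simps power2_eq_square)
  ultimately show "(FF has_field_derivative - (x^2 / (1 - x))) (at x within cball 0 r)"
    by (metis has_field_derivative_at_within)
  have "1 - r \<le> cmod (1 - x)" using norm_triangle_ineq2[of 1 x] d by simp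
  moreover have "cmod (x^2) \<le> r^2" using d by (simp add: norm_power power_mono)
  ultimately show "cmod (- (x^2 / (1 - x))) \<le> r^2 / (1 - r)" using assms(1)
    unfolding norm_minus_cancel norm_divide by (intro frac_le) auto
next
  show "h1 \<in> cball 0 r" "h2 \<in> cball 0 r" using assms by auto
qed


lemma unit_cnj: "cmod u = 1 \<Longrightarrow> u * cnj u = 1"
  using complex_norm_square[of u] by simp

lemma q_nz: "cmod al < 1 \<Longrightarrow> cmod u = 1 \<Longrightarrow> 1 - al * cnj u \<noteq> 0"
proof
  assume "cmod al < 1" "cmod u = 1" "1 - al * cnj u = 0"
  then have "al * cnj u = 1" by simp
  then have "cmod (al * cnj u) = 1" by simp
  with \<open>cmod al < 1\<close> \<open>cmod u = 1\<close> show False by (simp add: norm_mult)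
qed

lemma q_exp: assumes "q \<noteq> 0" shows "q / cnj q = exp (\<i> * of_real (2 * Im (Ln q)))"
proof -
  have "q / cnj q = exp (Ln q) / exp (cnj (Ln q))" using assms by (simp add: exp_cnj[symmetric])
  also have "\<dots> = exp (Ln q - cnj (Ln q))" by (simp add: exp_diff)
  also have "Ln q - cnj (Ln q) = \<i> * of_real (2 * Im (Ln q))" by (simp add: complex_eq_iff)
  finally show ?thesis .
qed

lemma ratio_exp:
  assumes al: "cmod al < 1" and v: "cmod v = 1" and w: "cmod w = 1" and k: "k \<noteq> 0"
  shows "(k * ((w - al) / (1 - cnj al * w))) / (k * ((v - al) / (1 - cnj al * v))) =
     (w/v) * exp (\<i> * of_real (2*(Im (Ln (1-al*cnj w)) - Im (Ln (1-al*cnj v)))))"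
proof -
  define qw where "qw = 1 - al*cnj w"
  define qv where "qv = 1 - al*cnj v"
  have qw0: "qw \<noteq> 0" and qv0: "qv \<noteq> 0" using q_nz al v w qw_def qv_def by auto
  have cqw0: "cnj qw \<noteq> 0" and cqv0: "cnj qv \<noteq> 0" using qw0 qv0 by auto
  have e1: "w - al = w * qw"
  proof -
    have "w * qw = w - al * (w * cnj w)" unfolding qw_def by (simp add: algebra_simps)
    then show ?thesis using unit_cnj[OF w] by simp
  qed
  have e2: "v - al = v * qv"
  proof -
    have "v * qv = v - al * (v * cnj v)" unfolding qv_def by (simp add: algebra_simps)
    then show ?thesis using unit_cnj[OF v] by simp
  qed
  have e3: "1 - cnj al * w = cnj qw" using qw_def by simp
  have e4: "1 - cnj al * v = cnj qv" using qv_def by simp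
  have v0: "v \<noteq> 0" using v by auto
  have "(k * ((w - al) / (1 - cnj al * w))) / (k * ((v - al) / (1 - cnj al * v))) = (w/v) * ((qw / cnj qw) / (qv / cnj qv))"
    unfolding e1 e2 e3 e4 using k qw0 qv0 cqw0 cqv0 v0 by (simp add: field_simps)
  also have "\<dots> = (w/v) * (exp (\<i> * of_real (2 * Im (Ln qw))) / exp (\<i> * of_real (2 * Im (Ln qv))))"
    using q_exp qw0 qv0 by simp
  also have "\<dots> = (w/v) * exp (\<i> * of_real (2*(Im (Ln qw) - Im (Ln qv))))"
    by (simp add: exp_diff[symmetric] algebra_simps)
  finally show ?thesis unfolding qw_def qv_def .
qed

definition PP :: "real \<Rightarrow> real \<Rightarrow> real \<Rightarrow> real \<Rightarrow> complex" where "PP a b c d = Complex (c-b) (a+d)"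
definition QQ :: "real \<Rightarrow> real \<Rightarrow> real \<Rightarrow> real \<Rightarrow> complex" where "QQ a b c d = Complex (-(b+c)) (d-a)"

lemma hatT_eq:
  "hatT a b c d u = (PP a b c d * u + QQ a b c d) / (- cnj (QQ a b c d) * u - cnj (PP a b c d))"
  unfolding hatT_def cmat_mult_def U_mat_def Uinv_mat_def T_mat_def mob_apply_def PP_def QQ_def
  apply simp
  apply (intro arg_cong2[where f="(/)"])
   apply (simp_all add: complex_eq_iff algebra_simps)
  done

lemma PQ_norm:
  "cmod (QQ a b c d) < cmod (PP a b c d)" if "a*d - b*c > 0"
proof -
  have "cmod (QQ a b c d)^2 < cmod (PP a b c d)^2"
    unfolding cmod_power2 PP_def QQ_def using that by (simp add: power2_eq_square algebra_simps)
  then show ?thesis using power2_less_imp_less by fastforce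
qed

lemma alpha_rel:
  assumes "mobT a b c d p = \<i>"
  shows "QQ a b c d * (\<i> + p) = PP a b c d * (p - \<i>)"
proof -
  have den: "of_real c * p + of_real d \<noteq> 0"
  proof
    assume "of_real c * p + of_real d = 0"
    then have "mobT a b c d p = 0" by (simp add: mobT_def mob_apply_def T_mat_def)
    then show False using assms by simp
  qed
  have h: "of_real a*p + of_real b = \<i>*(of_real c*p + of_real d)"
    using assms den by (simp add: mobT_def mob_apply_def T_mat_def divide_eq_eq)
  then have h1: "a * Re p + b = - (c * Im p)" and h2: "a * Im p = c * Re p + d"
    by (simp_all add: complex_eq_iff)
  show ?thesis using h1 h2 by (simp add: complex_eq_iff algebra_simps PP_def QQ_def)
qed

lemma alpha_main:
  assumes det: "a*d - b*c > 0" and im: "Im (\<i> + z) > 0" and T: "mobT a b c d (\<i> + z) = \<i>"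
  defines "al \<equiv> - z / (2*\<i> + z)"
  shows "cmod al < 1"
    and "\<And>u. hatT a b c d u = (- PP a b c d / cnj (PP a b c d)) * ((u - al) / (1 - cnj al * u))"
    and "PP a b c d \<noteq> 0"
proof -
  define P where "P = PP a b c d"
  define Q where "Q = QQ a b c d"
  have PQ: "cmod Q < cmod P" using PQ_norm det P_def Q_def by blast
  then show P0: "PP a b c d \<noteq> 0" using P_def by auto
  have d0: "2*\<i> + z \<noteq> 0" using im by (auto simp: complex_eq_iff)
  have "Q * (2*\<i> + z) = P * z" using alpha_rel[OF T] P_def Q_def by (simp add: algebra_simps)
  then have Qal: "Q = - al * P" using d0 unfolding al_def by (simp add: field_simps)
  then have "cmod Q = cmod al * cmod P" by (simp add: norm_mult)
  then show "cmod al < 1" using PQ P0 P_def by simp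
  fix u
  have cQ: "cnj Q = - cnj al * cnj P" using Qal by simp
  have cP0: "cnj P \<noteq> 0" using P0 P_def by simp
  show "hatT a b c d u = (- PP a b c d / cnj (PP a b c d)) * ((u - al) / (1 - cnj al * u))"
  proof (cases "1 - cnj al * u = 0")
    case True
    then have "- cnj Q * u - cnj P = 0" unfolding cQ by (simp add: algebra_simps)
    then show ?thesis using True by (simp add: hatT_eq P_def[symmetric] Q_def[symmetric])
  next
    case False
    have "hatT a b c d u = (P * u + Q) / (- cnj Q * u - cnj P)" by (simp add: hatT_eq P_def Q_def)
    also have "\<dots> = (- P / cnj P) * ((u - al) / (1 - cnj al * u))"
      unfolding Qal cQ using False cP0 by (simp add: field_simps)
    finally show ?thesis using P_def by simp
  qed
qed


lemma ident_aux: "-2*\<i> * (- (al * cw - al * cv) - ((al*cw)^2 - (al*cv)^2)/2) =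
   (cw - cv) * (- z - \<i> * (2 + cv + cw) / 4 * z^2) + (-2*\<i>) * ((al - \<i>*z/2 + z^2/4) * (cv - cw) + (al^2 + z^2/4) * (cv ^ 2 - cw ^ 2) / 2)"
  by (simp add: field_simps power2_eq_square)

lemma small_case:
  assumes z: "cmod z \<le> 1/3" and v: "cmod v = 1" and w: "cmod w = 1"
  defines "al \<equiv> - z / (2*\<i> + z)"
  defines "dl \<equiv> 2*(Im (Ln (1 - al * cnj w)) - Im (Ln (1 - al * cnj v)))"
  shows "\<bar>dl\<bar> \<le> cmod (w - v) / 2"
    and "\<bar>dl - Re ((cnj w - cnj v) * (- z - \<i> * (2 + cnj v + cnj w) / 4 * z^2))\<bar> \<le> 2 * cmod (w - v) * cmod z ^ 3"
proof -
  define D where "D = cmod (w - v)"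
  define Zc where "Zc = cmod z"
  define r where "r = cmod al"
  define hw where "hw = al * cnj w"
  define hv where "hv = al * cnj v"
  have D0: "0 \<le> D" and Z0: "0 \<le> Zc" and r0: "0 \<le> r" using D_def Zc_def r_def by auto
  have "cmod (2*\<i>) \<le> cmod (2*\<i>+z) + cmod (-z)" using norm_triangle_ineq[of "2*\<i>+z" "-z"] by simp
  then have n2: "5/3 \<le> cmod (2*\<i>+z)" using z by (simp add: norm_mult)
  then have d0: "2*\<i>+z \<noteq> 0" by auto
  have "r = Zc / cmod (2*\<i>+z)" unfolding r_def al_def Zc_def by (simp add: norm_divide)
  also have "\<dots> \<le> Zc / (5/3)" using n2 Z0 by (intro divide_left_mono) auto
  finally have rz: "r \<le> 3/5 * Zc" by simp
  then have r15: "r \<le> 1/5" using z Zc_def by simp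
  have nhw: "cmod hw = r" and nhv: "cmod hv = r" using v w unfolding hw_def hv_def r_def by (simp_all add: norm_mult)
  have dh: "cmod (hw - hv) = r * D"
  proof -
    have "hw - hv = al * cnj (w - v)" unfolding hw_def hv_def by (simp add: algebra_simps)
    moreover have "cmod (cnj (w - v)) = cmod (w - v)" by (rule complex_mod_cnj)
    ultimately show ?thesis unfolding r_def D_def by (simp only: norm_mult)
  qed
  have Llip: "cmod (Ln (1 - hw) - Ln (1 - hv)) \<le> cmod ((1 - hw) - (1 - hv)) / (1 - r)"
    by (rule Ln_lip) (use r15 nhw nhv in auto)
  then have Llip': "cmod (Ln (1 - hw) - Ln (1 - hv)) \<le> r * D / (1 - r)"
    using dh by (simp add: norm_minus_commute)
  have dlre: "dl = Re (-2*\<i> * (Ln (1 - hw) - Ln (1 - hv)))"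
    unfolding dl_def hw_def hv_def by simp
  have "\<bar>dl\<bar> \<le> cmod (-2*\<i> * (Ln (1 - hw) - Ln (1 - hv)))" unfolding dlre by (rule abs_Re_le_cmod)
  also have "\<dots> = 2 * cmod (Ln (1 - hw) - Ln (1 - hv))" by (simp add: norm_mult)
  also have "\<dots> \<le> 2 * (r * D / (1 - r))" using Llip' by simp
  also have "\<dots> \<le> D / 2"
  proof -
    have h: "D * (5 * r) \<le> D * 1" using r15 D0 by (intro mult_left_mono) auto
    have "2 * (r * D) \<le> D / 2 * (1 - r)" using h by (simp add: algebra_simps)
    then show ?thesis using r15 by (simp add: divide_simps)
  qed
  finally show "\<bar>dl\<bar> \<le> cmod (w - v) / 2" unfolding D_def .
  define ep where "ep = al - \<i>*z/2 + z^2/4"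
  define ep2 where "ep2 = al^2 + z^2/4"
  define X where "X = (cnj w - cnj v) * (- z - \<i> * (2 + cnj v + cnj w) / 4 * z^2)"
  define Fd where "Fd = FF hw - FF hv"
  define E where "E = ep * (cnj v - cnj w) + ep2 * (cnj v ^ 2 - cnj w ^ 2) / 2"
  have a1: "al * (2*\<i>+z) = -z" using d0 by (simp add: al_def)
  have ep_eq: "ep = z^3 / (4 * (2*\<i>+z))"
  proof -
    have "ep * (4 * (2*\<i>+z)) = 4 * (al * (2*\<i>+z)) - 2*\<i>*z*(2*\<i>+z) + z^2*(2*\<i>+z)"
      by (simp add: ep_def algebra_simps)
    also have "\<dots> = z^3" unfolding a1 by (simp add: algebra_simps power2_eq_square power3_eq_cube)
    moreover have "4 * (2*\<i>+z) \<noteq> 0" using d0 by (simp only: mult_eq_0_iff) simp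
    ultimately show ?thesis by (metis nonzero_mult_div_cancel_right)
  qed
  have ep2_eq: "ep2 = z^3 * (4*\<i> + z) / (4 * (2*\<i>+z)^2)"
  proof -
    have "ep2 * (4 * (2*\<i>+z)^2) = 4 * (al * (2*\<i>+z))^2 + z^2*(2*\<i>+z)^2"
      by (simp add: ep2_def algebra_simps power2_eq_square)
    also have "\<dots> = z^3 * (4*\<i> + z)" unfolding a1 by (simp add: algebra_simps power2_eq_square power3_eq_cube)
    moreover have "4 * (2*\<i>+z)^2 \<noteq> 0" using d0 by (simp only: mult_eq_0_iff power_eq_0_iff) simp
    ultimately show ?thesis by (metis nonzero_mult_div_cancel_right)
  qed
  have Lsplit: "Ln (1 - hw) - Ln (1 - hv) = Fd - (hw - hv) - (hw^2 - hv^2)/2"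
    unfolding Fd_def FF_def by (simp add: field_simps)
  have ident: "-2*\<i> * (- (hw - hv) - (hw^2 - hv^2)/2) = X + (-2*\<i>) * E"
    unfolding X_def E_def ep_def ep2_def hw_def hv_def by (rule ident_aux)
  have "dl = Re (-2*\<i> * Fd) + Re X + Re ((-2*\<i>) * E)"
  proof -
    have "-2*\<i> * (Ln (1 - hw) - Ln (1 - hv)) = -2*\<i> * Fd + (X + (-2*\<i>) * E)"
      unfolding Lsplit ident[symmetric] by (simp add: algebra_simps)
    then show ?thesis unfolding dlre by simp
  qed
  then have "\<bar>dl - Re X\<bar> \<le> \<bar>Re (-2*\<i> * Fd)\<bar> + \<bar>Re ((-2*\<i>) * E)\<bar>" by simp
  also have "\<dots> \<le> cmod (-2*\<i> * Fd) + cmod ((-2*\<i>) * E)" by (intro add_mono abs_Re_le_cmod)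
  also have "\<dots> = 2 * cmod Fd + 2 * cmod E" by (simp add: norm_mult)
  finally have main: "\<bar>dl - Re X\<bar> \<le> 2 * cmod Fd + 2 * cmod E" .
  have "cmod Fd \<le> r^2/(1-r) * cmod (hw - hv)" unfolding Fd_def
    by (rule FF_lip) (use r15 nhw nhv in auto)
  also have "\<dots> = r^3 * D / (1 - r)" using dh by (simp add: power2_eq_square power3_eq_cube)
  also have "\<dots> \<le> r^3 * D * (5/4)"
  proof -
    have "r^3 * D \<le> r^3 * D * (5/4) * (1 - r)"
    proof -
      have h0: "0 \<le> r^3 * D" using r0 D0 by simp
      have h1: "1 \<le> 5/4 * (1 - r)" using r15 by simp
      have "r^3 * D * 1 \<le> r^3 * D * (5/4 * (1 - r))" by (rule mult_left_mono[OF h1 h0])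
      then show ?thesis by (simp only: mult_1_right mult.assoc)
    qed
    then show ?thesis using r15 by (simp add: divide_simps)
  qed
  also have "\<dots> \<le> (3/5 * Zc)^3 * D * (5/4)"
  proof -
    have "r^3 \<le> (3/5 * Zc)^3" using rz r0 by (intro power_mono) auto
    then show ?thesis using D0 by (intro mult_right_mono) auto
  qed
  finally have Fdb0: "cmod Fd \<le> (3/5 * Zc)^3 * D * (5/4)" .
  have e: "(3/5 * Zc)^3 * D * (5/4) = 27/100 * Zc^3 * D" by (simp add: power3_eq_cube algebra_simps)
  have Fdb: "cmod Fd \<le> 27/100 * Zc^3 * D" using Fdb0 e by linarith
  have epb: "cmod ep \<le> 3/20 * Zc^3"
  proof -
    have "cmod ep = Zc^3 / (4 * cmod (2*\<i>+z))" unfolding ep_eq Zc_def by (simp only: norm_divide norm_mult norm_power) simp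
    also have "\<dots> \<le> Zc^3 / (4 * (5/3))" using n2 Z0 by (intro divide_left_mono) auto
    finally show ?thesis by simp
  qed
  have ep2b: "cmod ep2 \<le> 39/100 * Zc^3"
  proof -
    have "cmod (4*\<i> + z) \<le> cmod (4*\<i>) + cmod z" by (rule norm_triangle_ineq)
    then have n4: "cmod (4*\<i> + z) \<le> 13/3" using z by (simp add: norm_mult)
    have "(5/3)^2 \<le> cmod (2*\<i>+z)^2" using n2 by (intro power_mono) auto
    then have n22: "25/9 \<le> cmod (2*\<i>+z)^2" by (simp add: power2_eq_square)
    have "cmod ep2 = Zc^3 * cmod (4*\<i> + z) / (4 * cmod (2*\<i>+z)^2)" unfolding ep2_eq Zc_def by (simp only: norm_divide norm_mult norm_power) simp
    also have "\<dots> \<le> Zc^3 * (13/3) / (4 * (25/9))"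
      using n4 n22 Z0 by (intro frac_le mult_left_mono mult_right_mono) auto
    finally show ?thesis by simp
  qed
  have "cmod E \<le> cmod (ep * (cnj v - cnj w)) + cmod (ep2 * (cnj v ^ 2 - cnj w ^ 2) / 2)"
    unfolding E_def by (rule norm_triangle_ineq)
  also have "cmod (ep * (cnj v - cnj w)) = cmod ep * D"
    unfolding D_def by (metis complex_cnj_diff complex_mod_cnj norm_minus_commute norm_mult)
  also have "cmod (ep2 * (cnj v ^ 2 - cnj w ^ 2) / 2) \<le> cmod ep2 * D"
  proof -
    have "cnj v ^ 2 - cnj w ^ 2 = (cnj v - cnj w) * (cnj v + cnj w)" by (simp add: algebra_simps power2_eq_square)
    moreover have "cmod (cnj v - cnj w) = D" unfolding D_def by (metis complex_cnj_diff complex_mod_cnj norm_minus_commute)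
    moreover have "cmod (cnj v + cnj w) \<le> 2" using norm_triangle_ineq[of "cnj v" "cnj w"] v w by simp
    ultimately have "cmod (cnj v ^ 2 - cnj w ^ 2) \<le> D * 2" using D0 by (simp add: norm_mult mult_left_mono)
    then have "cmod ep2 * cmod (cnj v ^ 2 - cnj w ^ 2) \<le> cmod ep2 * (D * 2)" by (simp add: mult_left_mono)
    then show ?thesis by (simp add: norm_mult norm_divide)
  qed
  finally have "cmod E \<le> cmod ep * D + cmod ep2 * D" by simp
  also have "\<dots> \<le> 3/20 * Zc^3 * D + 39/100 * Zc^3 * D"
    using epb ep2b D0 by (intro add_mono mult_right_mono) auto
  finally have Eb: "cmod E \<le> 54/100 * Zc^3 * D" by (simp add: algebra_simps)
  have "\<bar>dl - Re X\<bar> \<le> 2 * (27/100 * Zc^3 * D) + 2 * (54/100 * Zc^3 * D)" using main Fdb Eb by linarith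
  also have "\<dots> \<le> 2 * D * Zc^3" using D0 Z0 by (simp add: algebra_simps)
  finally show "\<bar>dl - Re ((cnj w - cnj v) * (- z - \<i> * (2 + cnj v + cnj w) / 4 * z^2))\<bar> \<le> 2 * cmod (w - v) * cmod z ^ 3"
    unfolding X_def D_def Zc_def .
qed


lemma Arg_diff_bound:
  assumes gp: "Re gp > 0" and gi: "Re gi > 0" and dz: "cmod (gp - gi) = Zc"
  shows "\<bar>Arg gp - Arg gi\<bar> \<le> 2 * pi * Zc / cmod gi"
proof -
  have gi0: "gi \<noteq> 0" and gp0: "gp \<noteq> 0" using gp gi by auto
  have ngi: "cmod gi > 0" using gi0 by simp
  have Z0: "0 \<le> Zc" using dz by (metis norm_ge_zero)
  show ?thesis
  proof (cases "2 * Zc \<le> cmod gi")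
    case True
    have "cmod (Ln gp - Ln gi) \<le> (2 / cmod gi) * cmod (gp - gi)"
    proof (rule field_differentiable_bound [OF convex_closed_segment, where f' = inverse])
      fix x assume x: "x \<in> closed_segment gi gp"
      then obtain u where u: "0 \<le> u" "u \<le> 1" and xe: "x = (1 - u) *\<^sub>R gi + u *\<^sub>R gp"
        by (auto simp: in_segment)
      have "Re x = (1 - u) * Re gi + u * Re gp" using xe by simp
      also have "\<dots> > 0"
      proof (cases "u = 0")
        case True then show ?thesis using gi by simp
      next
        case False then have "u > 0" using u by simp
        then have "u * Re gp > 0" using gp by simp
        moreover have "(1 - u) * Re gi \<ge> 0" using u gi by simp
        ultimately show ?thesis by linarith
      qed
      finally have rx: "Re x > 0" .
      then show "(Ln has_field_derivative inverse x) (at x within closed_segment gi gp)"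
        by (rule has_field_derivative_at_within[OF has_field_derivative_Ln[OF Re_pos_not_nonpos]])
      have "x - gi = u *\<^sub>R (gp - gi)" using xe by (simp add: algebra_simps)
      then have "cmod (x - gi) = u * Zc" using u dz by simp
      also have "\<dots> \<le> Zc" using u Z0 by (intro mult_left_le_one_le) auto
      finally have "cmod (x - gi) \<le> Zc" .
      then have "cmod gi - Zc \<le> cmod x" using norm_triangle_ineq2[of gi x] by (simp add: norm_minus_commute)
      then have "cmod gi / 2 \<le> cmod x" using True by simp
      then have "inverse (cmod x) \<le> inverse (cmod gi / 2)" using ngi by (intro le_imp_inverse_le) auto
      then show "cmod (inverse x) \<le> 2 / cmod gi" by (simp add: norm_inverse)
    qed auto
    then have L: "cmod (Ln gp - Ln gi) \<le> 2 * Zc / cmod gi" using dz by simp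
    have "\<bar>Arg gp - Arg gi\<bar> = \<bar>Im (Ln gp - Ln gi)\<bar>" using gi0 gp0 by (simp add: Arg_eq_Im_Ln)
    also have "\<dots> \<le> cmod (Ln gp - Ln gi)" by (rule abs_Im_le_cmod)
    also have "\<dots> \<le> 2 * Zc / cmod gi" by (rule L)
    also have "\<dots> \<le> 2 * pi * Zc / cmod gi"
    proof -
      have "2 * Zc \<le> (2 * pi) * Zc" using Z0 pi_gt3 by (intro mult_right_mono) auto
      then show ?thesis using ngi by (intro divide_right_mono) auto
    qed
    finally show ?thesis .
  next
    case False
    have "\<bar>Arg gp\<bar> < pi/2" "\<bar>Arg gi\<bar> < pi/2" using Arg_Re_pos gp gi by blast+
    then have "\<bar>Arg gp - Arg gi\<bar> \<le> pi" by linarith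
    also have "pi \<le> 2 * pi * Zc / cmod gi"
      using False ngi by (simp add: divide_simps)
    finally show ?thesis .
  qed
qed

lemma ratio_abs: fixes k km x y A B C :: complex
  assumes "k \<noteq> 0" "A \<noteq> 0" "B \<noteq> 0" "C \<noteq> 0" "y \<noteq> 0" "km = -k"
  shows "((k*x/(A*B)) / (km*y/(C*A))) / ((km/B) / (km/C)) = -x/y"
  using assms by (simp add: field_simps)

lemma ratio_half:
  fixes S p pc :: complex
  assumes n1: "\<i>+p \<noteq> 0" and n2: "-\<i> + pc \<noteq> 0" and n3: "\<i>+S \<noteq> 0" and n4: "S - pc \<noteq> 0" and n5: "S - p \<noteq> 0"
  shows "(((\<i>-S)/(\<i>+S) - (\<i>-p)/(\<i>+p)) / (1 - ((-\<i>-pc)/(-\<i>+pc)) * ((\<i>-S)/(\<i>+S)))) /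
         ((-1 - (\<i>-p)/(\<i>+p)) / (1 - ((-\<i>-pc)/(-\<i>+pc)) * (-1))) = (S - p)/(S - pc)"
proof -
  have a: "(\<i>-S)/(\<i>+S) - (\<i>-p)/(\<i>+p) = 2*\<i>*(p - S)/((\<i>+S)*(\<i>+p))"
  proof -
    have "(\<i>-S)/(\<i>+S) - (\<i>-p)/(\<i>+p) = ((\<i>-S)*(\<i>+p) - (\<i>-p)*(\<i>+S))/((\<i>+S)*(\<i>+p))"
      using n1 n3 by (simp add: diff_frac_eq)
    also have "(\<i>-S)*(\<i>+p) - (\<i>-p)*(\<i>+S) = 2*\<i>*(p - S)" by (simp add: algebra_simps)
    finally show ?thesis .
  qed
  have b: "1 - ((-\<i>-pc)/(-\<i>+pc)) * ((\<i>-S)/(\<i>+S)) = -2*\<i>*(S - pc)/((-\<i>+pc)*(\<i>+S))"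
  proof -
    have "1 - ((-\<i>-pc)/(-\<i>+pc)) * ((\<i>-S)/(\<i>+S)) = ((-\<i>+pc)*(\<i>+S) - (-\<i>-pc)*(\<i>-S))/((-\<i>+pc)*(\<i>+S))"
      using n2 n3 by (subst times_divide_times_eq, subst diff_divide_eq_iff) auto
    also have "(-\<i>+pc)*(\<i>+S) - (-\<i>-pc)*(\<i>-S) = -2*\<i>*(S - pc)" by (simp add: algebra_simps)
    finally show ?thesis .
  qed
  have c: "-1 - (\<i>-p)/(\<i>+p) = -2*\<i>/(\<i>+p)"
  proof -
    have "-1 - (\<i>-p)/(\<i>+p) = ((-1)*(\<i>+p) - (\<i>-p))/(\<i>+p)" using n1 by (subst diff_divide_eq_iff) auto
    also have "(-1)*(\<i>+p) - (\<i>-p) = -2*\<i>" by simp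
    finally show ?thesis .
  qed
  have d: "1 - ((-\<i>-pc)/(-\<i>+pc)) * (-1) = -2*\<i>/(-\<i>+pc)"
  proof -
    have "1 - ((-\<i>-pc)/(-\<i>+pc)) * (-1) = 1 + (-\<i>-pc)/(-\<i>+pc)" by simp
    also have "\<dots> = (1*(-\<i>+pc) + (-\<i>-pc))/(-\<i>+pc)" using n2 by (subst add_divide_eq_iff) auto
    also have "1*(-\<i>+pc) + (-\<i>-pc) = -2*\<i>" by simp
    finally show ?thesis .
  qed
  have "((2*\<i>*(p - S)/((\<i>+S)*(\<i>+p))) / (-2*\<i>*(S - pc)/((-\<i>+pc)*(\<i>+S)))) / ((-2*\<i>/(\<i>+p)) / (-2*\<i>/(-\<i>+pc)))
     = -(p - S)/(S - pc)"
    by (rule ratio_abs) (use n1 n2 n3 n4 in auto)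
  then show ?thesis unfolding a b c d by (simp add: minus_diff_eq)
qed

lemma large_case:
  assumes im: "Im (\<i> + z) > 0" and w: "cmod w = 1" and wn: "w \<noteq> -1"
  defines "al \<equiv> - z / (2*\<i> + z)"
  shows "\<bar>Arg02 (((w - al) / (1 - cnj al * w)) / ((-1 - al) / (1 - cnj al * (-1)))) - Arg02 (w / (-1))\<bar>
           \<le> 2 * pi * cmod (w + 1) * cmod z"
proof -
  define p where "p = \<i> + z"
  define pc where "pc = cnj p"
  have imp: "Im p > 0" using im p_def by simp
  have w0: "w \<noteq> 0" using w by auto
  have w1: "1 + w \<noteq> 0" using wn by (metis add.commute add_eq_0_iff)
  define t where "t = \<i> * (1 - w) / (1 + w)"
  have cw: "cnj w = inverse w" using unit_cnj[OF w] by (metis inverse_unique)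
  have iw1: "1 + inverse w \<noteq> 0"
  proof
    assume "1 + inverse w = 0"
    then have "inverse w = -1" by (simp add: add_eq_0_iff)
    then have "w = -1" by (metis inverse_minus_eq inverse_inverse_eq inverse_1)
    with wn show False by simp
  qed
  have ct: "cnj t = t"
  proof -
    have "cnj t = - \<i> * (1 - inverse w) / (1 + inverse w)" unfolding t_def cw[symmetric] by simp
    also have "\<dots> = - \<i> * ((1 - inverse w) / (1 + inverse w))" by simp
    also have "(1 - inverse w) / (1 + inverse w) = (w - 1) / (w + 1)"
    proof -
      have "1 - inverse w = (w - 1) / w" using w0 by (simp add: diff_divide_distrib inverse_eq_divide)
      moreover have "1 + inverse w = (w + 1) / w" using w0 by (simp add: add_divide_distrib inverse_eq_divide)
      ultimately show ?thesis using w0 by simp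
    qed
    also have "- \<i> * ((w - 1) / (w + 1)) = \<i> * (1 - w) / (1 + w)" by (simp add: algebra_simps)
    finally show ?thesis unfolding t_def .
  qed
  define s where "s = Re t"
  define S where "S = complex_of_real s"
  have tS: "t = S" using ct unfolding S_def s_def by (simp add: complex_eq_iff)
  have cS: "cnj S = S" unfolding S_def by simp
  have iS: "\<i> + S \<noteq> 0" unfolding S_def by (simp add: complex_eq_iff)
  have wS: "w = (\<i> - S) / (\<i> + S)"
  proof -
    have tw: "t * (1 + w) = \<i> * (1 - w)" unfolding t_def using w1 by simp
    have "(\<i> + t) * w - (\<i> - t) = t * (1 + w) - \<i> * (1 - w)" by (simp add: algebra_simps)
    then have "(\<i> + t) * w = \<i> - t" using tw by simp
    then show ?thesis using iS tS by (simp add: eq_divide_eq mult.commute)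
  qed
  have al_eq: "al = (\<i> - p) / (\<i> + p)" unfolding al_def p_def
    by (simp add: minus_divide_left[symmetric])
  have cal: "cnj al = (-\<i> - pc) / (-\<i> + pc)" unfolding al_eq pc_def by simp
  have n1: "\<i> + p \<noteq> 0" using imp by (auto simp: complex_eq_iff)
  have n2: "-\<i> + pc \<noteq> 0" using imp by (auto simp: complex_eq_iff pc_def)
  have n4: "S - pc \<noteq> 0" using imp by (auto simp: complex_eq_iff pc_def S_def)
  have n5: "S - p \<noteq> 0" using imp by (auto simp: complex_eq_iff S_def)
  have ratio: "((w - al) / (1 - cnj al * w)) / ((-1 - al) / (1 - cnj al * (-1))) = (S - p) / (S - pc)"
    unfolding cal unfolding al_eq wS by (rule ratio_half[OF n1 n2 iS n4 n5])
  define gp where "gp = \<i> * (S - p)"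
  define gi where "gi = \<i> * (S - \<i>)"
  have r1: "(S - p) / (S - pc) = - gp / cnj gp"
  proof -
    have "cnj gp = - \<i> * (S - pc)" unfolding gp_def pc_def using cS by simp
    then have "- gp / cnj gp = (\<i> * (S - p)) / (\<i> * (S - pc))" unfolding gp_def by simp
    then show ?thesis by simp
  qed
  have r2: "w / (-1) = - gi / cnj gi"
  proof -
    have "cnj gi = - \<i> * (S + \<i>)" unfolding gi_def using cS by simp
    then have "- gi / cnj gi = (\<i> * (S - \<i>)) / (\<i> * (S + \<i>))" unfolding gi_def by simp
    also have "\<dots> = (S - \<i>) / (S + \<i>)" by simp
    also have "\<dots> = w / (-1)" unfolding wS by (simp add: minus_divide_left)
    finally show ?thesis by simp
  qed
  have Rgp: "Re gp > 0" unfolding gp_def S_def using imp by simp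
  have Rgi: "Re gi > 0" unfolding gi_def S_def by simp
  have dz: "cmod (gp - gi) = cmod z"
  proof -
    have "gp - gi = - \<i> * z" unfolding gp_def gi_def p_def by (simp add: algebra_simps)
    then show ?thesis by (simp add: norm_mult)
  qed
  have A: "\<bar>Arg gp - Arg gi\<bar> \<le> 2 * pi * cmod z / cmod gi" by (rule Arg_diff_bound[OF Rgp Rgi dz])
  have gi0: "cmod gi > 0" using Rgi by auto
  have wp1: "cmod (w + 1) = 2 / cmod gi"
  proof -
    have "w + 1 = 2 * \<i> / (\<i> + S)" unfolding wS using iS by (simp add: field_simps)
    moreover have "cmod (\<i> + S) = cmod gi"
    proof -
      have e: "gi = \<i> * cnj (\<i> + S)" unfolding gi_def using cS by simp
      show ?thesis unfolding e by (simp only: norm_mult complex_mod_cnj) simp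
    qed
    ultimately show ?thesis by (simp add: norm_divide norm_mult)
  qed
  have "Arg02 (((w - al) / (1 - cnj al * w)) / ((-1 - al) / (1 - cnj al * (-1)))) - Arg02 (w / (-1))
        = 2 * (Arg gp - Arg gi)"
    unfolding ratio r1 r2 Arg02_half[OF Rgp] Arg02_half[OF Rgi] by simp
  then have "\<bar>Arg02 (((w - al) / (1 - cnj al * w)) / ((-1 - al) / (1 - cnj al * (-1)))) - Arg02 (w / (-1))\<bar>
        \<le> 2 * (2 * pi * cmod z / cmod gi)" using A by simp
  also have "\<dots> = 2 * pi * cmod (w + 1) * cmod z" unfolding wp1 using gi0 by (simp add: field_simps)
  finally show ?thesis .
qed


theorem mainTheorem11:
  shows "\<exists>C::real. \<forall>(a::real) b c d (z::complex) v w.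
     a * d - b * c > 0 \<longrightarrow> Im (\<i> + z) > 0 \<longrightarrow> mobT a b c d (\<i> + z) = \<i> \<longrightarrow>
     cmod v = 1 \<longrightarrow> cmod w = 1 \<longrightarrow> (cmod z \<le> 1/3 \<or> v = -1) \<longrightarrow>
     (let e3 = ash a b c d v w - Re ((cnj w - cnj v) * (- z - \<i> * (2 + cnj v + cnj w) / 4 * z^2));
          e2 = ash a b c d v w + Re ((cnj w - cnj v) * z);
          e1 = ash a b c d v w
      in \<bar>e3\<bar> \<le> C * cmod (w - v) * cmod z ^ 3 \<and> C * cmod (w - v) * cmod z ^ 3 \<le> 2 * C * cmod z ^ 3 \<and>
         \<bar>e2\<bar> \<le> C * cmod (w - v) * cmod z ^ 2 \<and> C * cmod (w - v) * cmod z ^ 2 \<le> 2 * C * cmod z ^ 2 \<and>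
         \<bar>e1\<bar> \<le> C * cmod (w - v) * cmod z \<and> C * cmod (w - v) * cmod z \<le> 2 * C * cmod z)"
proof (rule exI[of _ 100], intro allI impI)
  fix a b c d :: real and z v w :: complex
  assume det: "a * d - b * c > 0" and im: "Im (\<i> + z) > 0" and T: "mobT a b c d (\<i> + z) = \<i>"
    and v: "cmod v = 1" and w: "cmod w = 1" and cz: "cmod z \<le> 1/3 \<or> v = -1"
  define D where "D = cmod (w - v)"
  define Z where "Z = cmod z"
  define A where "A = ash a b c d v w"
  define X where "X = (cnj w - cnj v) * (- z - \<i> * (2 + cnj v + cnj w) / 4 * z^2)"
  define Y where "Y = Re ((cnj w - cnj v) * z)"
  define al where "al = - z / (2*\<i> + z)"
  define k where "k = - PP a b c d / cnj (PP a b c d)"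
  have al1: "cmod al < 1" using alpha_main(1)[OF det im T] al_def by simp
  have hT: "\<And>u. hatT a b c d u = k * ((u - al) / (1 - cnj al * u))"
    using alpha_main(2)[OF det im T] al_def k_def by simp
  have k0: "k \<noteq> 0" using alpha_main(3)[OF det im T] k_def by simp
  have D0: "0 \<le> D" and Z0: "0 \<le> Z" using D_def Z_def by auto
  have cD: "cmod (cnj w - cnj v) = D" unfolding D_def by (metis complex_cnj_diff complex_mod_cnj)
  have D2: "D \<le> 2" unfolding D_def using norm_triangle_ineq4[of w v] v w by simp
  have v0: "v \<noteq> 0" using v by auto
  have Ydef: "\<bar>Y\<bar> \<le> D * Z"
  proof -
    have "\<bar>Y\<bar> \<le> cmod ((cnj w - cnj v) * z)" unfolding Y_def by (rule abs_Re_le_cmod)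
    then show ?thesis using cD by (simp add: norm_mult Z_def)
  qed
  have XY: "\<bar>Re X + Y\<bar> \<le> D * Z^2"
  proof -
    have "Re X + Y = Re ((cnj w - cnj v) * (- (\<i> * (2 + cnj v + cnj w) / 4) * z^2))"
      unfolding X_def Y_def by (simp add: algebra_simps)
    also have "\<bar>\<dots>\<bar> \<le> cmod ((cnj w - cnj v) * (- (\<i> * (2 + cnj v + cnj w) / 4) * z^2))" by (rule abs_Re_le_cmod)
    also have "\<dots> = D * (cmod (2 + cnj v + cnj w) / 4) * Z^2"
      using cD by (simp add: norm_mult norm_divide norm_power Z_def)
    also have "\<dots> \<le> D * 1 * Z^2"
    proof -
      have "cmod (2 + cnj v + cnj w) \<le> cmod (2 + cnj v) + cmod (cnj w)" by (rule norm_triangle_ineq)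
      also have "cmod (2 + cnj v) \<le> cmod (2::complex) + cmod (cnj v)" by (rule norm_triangle_ineq)
      finally have "cmod (2 + cnj v + cnj w) \<le> 4" using v w by simp
      then show ?thesis using D0 Z0 by (intro mult_right_mono mult_left_mono) auto
    qed
    finally show ?thesis by simp
  qed
  have Aeq: "A = Arg02 (hatT a b c d w / hatT a b c d v) - Arg02 (w / v)" unfolding A_def ash_def ..
  have small: "\<bar>A - Re X\<bar> \<le> 2 * D * Z^3" if zs: "Z \<le> 1/3"
  proof -
    define dl where "dl = 2*(Im (Ln (1 - al * cnj w)) - Im (Ln (1 - al * cnj v)))"
    have sc1: "\<bar>dl\<bar> \<le> cmod (w - v) / 2" using small_case(1)[of z v w] zs v w Z_def al_def dl_def by simp
    have sc2: "\<bar>dl - Re X\<bar> \<le> 2 * D * Z^3" using small_case(2)[of z v w] zs v w Z_def al_def dl_def X_def D_def by simp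
    have rat: "hatT a b c d w / hatT a b c d v = (w/v) * exp (\<i> * of_real dl)"
      unfolding hT dl_def by (rule ratio_exp[OF al1 v w k0])
    have uv: "cmod (w/v) = 1" using v w by (simp add: norm_divide)
    have "cmod (w/v - 1) = cmod (w - v)"
    proof -
      have "w/v - 1 = (w - v)/v" using v0 by (simp add: diff_divide_distrib)
      then show ?thesis using v by (simp add: norm_divide)
    qed
    then have "\<bar>dl\<bar> \<le> cmod (w/v - 1) / 2" using sc1 by simp
    then have "Arg02 ((w/v) * exp (\<i> * of_real dl)) = Arg02 (w/v) + dl" by (rule Arg02_shift[OF uv])
    then have "A = dl" unfolding Aeq rat by simp
    then show ?thesis using sc2 by simp
  qed
  have large: "\<bar>A\<bar> \<le> 8 * D * Z" if vm: "v = -1"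
  proof (cases "w = -1")
    case True
    have "hatT a b c d w / hatT a b c d v = 0 \<or> hatT a b c d w / hatT a b c d v = 1"
      using True vm by (cases "hatT a b c d (-1) = 0") auto
    then have "A = 0" unfolding Aeq using True vm by (auto simp: Arg02_def Arg_zero)
    then show ?thesis using D0 Z0 by simp
  next
    case False
    have "hatT a b c d w / hatT a b c d v = ((w - al) / (1 - cnj al * w)) / ((-1 - al) / (1 - cnj al * (-1)))"
      unfolding hT vm using k0 by simp
    then have "\<bar>A\<bar> \<le> 2 * pi * cmod (w + 1) * cmod z"
      unfolding Aeq using large_case[OF im w False] vm al_def by simp
    also have "\<dots> = 2 * pi * D * Z" unfolding D_def Z_def vm by simp
    also have "\<dots> \<le> 8 * D * Z"
    proof -
      have "2 * pi \<le> 8" using pi_less_4 by simp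
      then show ?thesis using D0 Z0 by (intro mult_right_mono) auto
    qed
    finally show ?thesis .
  qed
  define m1 where "m1 = D * Z"
  define m2 where "m2 = D * Z^2"
  define m3 where "m3 = D * Z^3"
  have m0: "0 \<le> m1" "0 \<le> m2" "0 \<le> m3" unfolding m1_def m2_def m3_def using D0 Z0 by auto
  have b: "\<bar>A - Re X\<bar> \<le> 100 * m3 \<and> \<bar>A + Y\<bar> \<le> 100 * m2 \<and> \<bar>A\<bar> \<le> 100 * m1"
  proof (cases "Z \<le> 1/3")
    case True
    have s: "\<bar>A - Re X\<bar> \<le> 2 * m3" using small[OF True] m3_def by (simp add: mult.assoc)
    have r1: "3 * m3 \<le> m2"
    proof -
      have "D * Z^2 * (3 * Z) \<le> D * Z^2 * 1" using True D0 Z0 by (intro mult_left_mono) auto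
      then show ?thesis unfolding m2_def m3_def by (simp add: power3_eq_cube power2_eq_square algebra_simps)
    qed
    have r2: "3 * m2 \<le> m1"
    proof -
      have "D * Z * (3 * Z) \<le> D * Z * 1" using True D0 Z0 by (intro mult_left_mono) auto
      then show ?thesis unfolding m1_def m2_def by (simp add: power2_eq_square algebra_simps)
    qed
    have "\<bar>A + Y\<bar> \<le> \<bar>A - Re X\<bar> + \<bar>Re X + Y\<bar>" by linarith
    moreover have "\<bar>A\<bar> \<le> \<bar>A + Y\<bar> + \<bar>Y\<bar>" by linarith
    ultimately show ?thesis using s XY Ydef r1 r2 m0 unfolding m1_def[symmetric] m2_def[symmetric] by linarith
  next
    case False
    then have vm: "v = -1" using cz Z_def by auto
    have l: "\<bar>A\<bar> \<le> 8 * m1" using large[OF vm] m1_def by (simp add: mult.assoc)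
    have r1: "m2 \<le> 3 * m3"
    proof -
      have "D * Z^2 * 1 \<le> D * Z^2 * (3 * Z)" using False D0 Z0 by (intro mult_left_mono) auto
      then show ?thesis unfolding m2_def m3_def by (simp add: power3_eq_cube power2_eq_square algebra_simps)
    qed
    have r2: "m1 \<le> 3 * m2"
    proof -
      have "D * Z * 1 \<le> D * Z * (3 * Z)" using False D0 Z0 by (intro mult_left_mono) auto
      then show ?thesis unfolding m1_def m2_def by (simp add: power2_eq_square algebra_simps)
    qed
    have "\<bar>A - Re X\<bar> \<le> \<bar>A\<bar> + \<bar>Y\<bar> + \<bar>Re X + Y\<bar>" by linarith
    moreover have "\<bar>A + Y\<bar> \<le> \<bar>A\<bar> + \<bar>Y\<bar>" by linarith
    ultimately show ?thesis using l XY Ydef r1 r2 m0 unfolding m1_def[symmetric] m2_def[symmetric] by linarith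
  qed
  have c1: "100 * D * Z^3 \<le> 2 * 100 * Z^3" "100 * D * Z^2 \<le> 2 * 100 * Z^2" "100 * D * Z \<le> 2 * 100 * Z"
    using D2 Z0 by (auto intro!: mult_right_mono)
  show "let e3 = ash a b c d v w - Re ((cnj w - cnj v) * (- z - \<i> * (2 + cnj v + cnj w) / 4 * z^2));
          e2 = ash a b c d v w + Re ((cnj w - cnj v) * z);
          e1 = ash a b c d v w
      in \<bar>e3\<bar> \<le> 100 * cmod (w - v) * cmod z ^ 3 \<and> 100 * cmod (w - v) * cmod z ^ 3 \<le> 2 * 100 * cmod z ^ 3 \<and>
         \<bar>e2\<bar> \<le> 100 * cmod (w - v) * cmod z ^ 2 \<and> 100 * cmod (w - v) * cmod z ^ 2 \<le> 2 * 100 * cmod z ^ 2 \<and>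
         \<bar>e1\<bar> \<le> 100 * cmod (w - v) * cmod z \<and> 100 * cmod (w - v) * cmod z \<le> 2 * 100 * cmod z"
    unfolding Let_def A_def[symmetric] X_def[symmetric] Y_def[symmetric] D_def[symmetric] Z_def[symmetric]
    using b c1 unfolding m1_def m2_def m3_def by (simp add: mult.assoc)
qed


end
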